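(* Let $a_1,\ldots,a_n$ be relatively prime positive integers, $\mathcal{S}=\langle a_1,\ldots,a_n\rangle$, and let $e$ be a positive integer with $\gcd(e,a_1)=1$; put $\mathcal{S}^e=\langle a_1,ea_2,\ldots,ea_n\rangle$. Then $\Delta(\mathcal{S}^e)=e\,\Delta(\mathcal{S})$. Consequently, if $\mathcal{S}^e$ is pseudo-symmetric then $e=1$.
   Context: For a numerical semigroup $\mathcal{S}$ (a submonoid of $\mathbb{Z}_{\ge 0}$ with finite complement), the Frobenius number $g(\mathcal{S})$ is the largest integer not in $\mathcal{S}$, the genus $N(\mathcal{S})$ is the number of non-negative integers not in $\mathcal{S}$, and $\Delta(\mathcal{S})=2N(\mathcal{S})-1-g(\mathcal{S})$. $\mathcal{S}$ is pseudo-symmetric if $g(\mathcal{S})$ is even and $\mathcal{S}\cup(g(\mathcal{S})-\mathcal{S})=\mathbb{Z}\setminus\{g(\mathcal{S})/2\}$, where $g-\mathcal{S}=\{g-s: s\in\mathcal{S}\}$; it is known that this is equivalent to $\Delta(\mathcal{S})=1$. $\langle b_1,\ldots,b_t\rangle$ denotes the set of non-negative integer linear combinations of $b_1,\ldots,b_t$. *)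

theory Defs
  imports Main
begin

definition gen_sg :: "nat set \<Rightarrow> nat set" where
  "gen_sg B = {x. \<exists>c::nat \<Rightarrow> nat. x = (\<Sum>b\<in>B. c b * b)}"

text \<open>Frobenius number: largest integer not in S (equals -1 when S is all of the naturals).\<close>
definition frobenius :: "nat set \<Rightarrow> int" where
  "frobenius S = (GREATEST x::int. x \<notin> int ` S)"

definition genus :: "nat set \<Rightarrow> nat" where
  "genus S = card (UNIV - S)"

definition Delta :: "nat set \<Rightarrow> int" where
  "Delta S = 2 * int (genus S) - 1 - frobenius S"

definition pseudo_symmetric :: "nat set \<Rightarrow> bool" where
  "pseudo_symmetric S \<longleftrightarrow> even (frobenius S) \<and>
     int ` S \<union> {frobenius S - int s | s. s \<in> S} = UNIV - {frobenius S div 2}"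

end

theory Submission
  imports Defs
begin


lemma gen_add: "x \<in> gen_sg B \<Longrightarrow> y \<in> gen_sg B \<Longrightarrow> x + y \<in> gen_sg B"
proof -
  assume "x \<in> gen_sg B" "y \<in> gen_sg B"
  then obtain c d where "x = (\<Sum>b\<in>B. c b * b)" "y = (\<Sum>b\<in>B. d b * b)" unfolding gen_sg_def by blast
  then have "x + y = (\<Sum>b\<in>B. (c b + d b) * b)" by (simp add: sum.distrib algebra_simps)
  then show ?thesis unfolding gen_sg_def mem_Collect_eq by (rule exI[where x="\<lambda>b. c b + d b"])
qed

lemma gen_scale: "x \<in> gen_sg B \<Longrightarrow> k * x \<in> gen_sg B"
proof -
  assume "x \<in> gen_sg B"
  then obtain c where "x = (\<Sum>b\<in>B. c b * b)" unfolding gen_sg_def by blast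
  then have "k * x = (\<Sum>b\<in>B. (k * c b) * b)" by (simp add: sum_distrib_left algebra_simps)
  then show ?thesis unfolding gen_sg_def mem_Collect_eq by (rule exI[where x="\<lambda>b. k * c b"])
qed

lemma gen_mem: "finite B \<Longrightarrow> b \<in> B \<Longrightarrow> b \<in> gen_sg B"
proof -
  assume "finite B" "b \<in> B"
  then have "(\<Sum>x\<in>B. (if x = b then 1 else 0) * x) = b"
  proof -
    have "(\<Sum>x\<in>B. (if x = b then 1 else 0) * x) = (\<Sum>x\<in>B. if x = b then x else 0)"
      by (rule sum.cong) auto
    then show ?thesis using \<open>finite B\<close> \<open>b \<in> B\<close> by (simp add: sum.delta)
  qed
  then show ?thesis unfolding gen_sg_def mem_Collect_eq by (intro exI[where x="\<lambda>x. if x = b then 1 else 0"]) simp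
qed

lemma gen_insert:
  assumes "finite B"
  shows "x \<in> gen_sg (insert b B) \<longleftrightarrow> (\<exists>k t. t \<in> gen_sg B \<and> x = k * b + t)"
proof (cases "b \<in> B")
  case True
  then have e: "insert b B = B" by blast
  show ?thesis
  proof
    assume "x \<in> gen_sg (insert b B)" then have "x \<in> gen_sg B" using e by simp
    then show "\<exists>k t. t \<in> gen_sg B \<and> x = k * b + t"
      by (intro exI[where x=0] exI[where x=x]) simp
  next
    assume "\<exists>k t. t \<in> gen_sg B \<and> x = k * b + t"
    then obtain k t where "t \<in> gen_sg B" "x = k * b + t" by blast
    moreover have "k * b \<in> gen_sg B" using gen_scale gen_mem[OF assms True] by blast
    ultimately show "x \<in> gen_sg (insert b B)" using e gen_add by simp
  qed
next
  case False
  show ?thesis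
  proof
    assume "x \<in> gen_sg (insert b B)"
    then obtain c where "x = (\<Sum>y\<in>insert b B. c y * y)" unfolding gen_sg_def by blast
    then have "x = c b * b + (\<Sum>y\<in>B. c y * y)" using False assms by simp
    moreover have "(\<Sum>y\<in>B. c y * y) \<in> gen_sg B" unfolding gen_sg_def mem_Collect_eq by (rule exI[where x=c]) simp
    ultimately show "\<exists>k t. t \<in> gen_sg B \<and> x = k * b + t" by blast
  next
    assume "\<exists>k t. t \<in> gen_sg B \<and> x = k * b + t"
    then obtain k t where kt: "t \<in> gen_sg B" "x = k * b + t" by blast
    then obtain c where x: "x = k * b + (\<Sum>y\<in>B. c y * y)" unfolding gen_sg_def by blast
    have "(\<Sum>y\<in>insert b B. (c(b:=k)) y * y) = k * b + (\<Sum>y\<in>B. (c(b:=k)) y * y)"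
      using False assms by simp
    also have "(\<Sum>y\<in>B. (c(b:=k)) y * y) = (\<Sum>y\<in>B. c y * y)"
      using False by (intro sum.cong) auto
    finally have "x = (\<Sum>y\<in>insert b B. (c(b:=k)) y * y)" using x by simp
    then show "x \<in> gen_sg (insert b B)" unfolding gen_sg_def mem_Collect_eq by (rule exI[where x="c(b:=k)"])
  qed
qed

lemma gen_image_mult:
  assumes "finite B" "e > 0"
  shows "gen_sg ((*) e ` B) = (*) e ` gen_sg B"
proof
  have inj: "inj_on ((*) e) B" using assms by (auto simp: inj_on_def)
  show "gen_sg ((*) e ` B) \<subseteq> (*) e ` gen_sg B"
  proof
    fix x assume "x \<in> gen_sg ((*) e ` B)"
    then obtain c where "x = (\<Sum>y\<in>(*) e ` B. c y * y)" unfolding gen_sg_def by blast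
    also have "\<dots> = (\<Sum>b\<in>B. c (e*b) * (e*b))" using sum.reindex[OF inj] by simp
    also have "\<dots> = e * (\<Sum>b\<in>B. c (e*b) * b)" by (simp add: sum_distrib_left algebra_simps)
    finally have "x = e * (\<Sum>b\<in>B. c (e*b) * b)" .
    moreover have "(\<Sum>b\<in>B. c (e*b) * b) \<in> gen_sg B"
      unfolding gen_sg_def mem_Collect_eq by (rule exI[where x="\<lambda>b. c (e*b)"]) simp
    ultimately show "x \<in> (*) e ` gen_sg B" by blast
  qed
  show "(*) e ` gen_sg B \<subseteq> gen_sg ((*) e ` B)"
  proof
    fix x assume "x \<in> (*) e ` gen_sg B"
    then obtain t where t: "t \<in> gen_sg B" "x = e * t" by blast
    then obtain d where x: "x = e * (\<Sum>b\<in>B. d b * b)" unfolding gen_sg_def by blast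
    have "(\<Sum>y\<in>(*) e ` B. d (y div e) * y) = (\<Sum>b\<in>B. d (e * b div e) * (e*b))"
      using sum.reindex[OF inj, of "\<lambda>y. d (y div e) * y"] by simp
    also have "\<dots> = e * (\<Sum>b\<in>B. d b * b)" using assms by (simp add: sum_distrib_left algebra_simps)
    finally have "x = (\<Sum>y\<in>(*) e ` B. d (y div e) * y)" using x by simp
    then show "x \<in> gen_sg ((*) e ` B)" unfolding gen_sg_def mem_Collect_eq by (rule exI[where x="\<lambda>y. d (y div e)"])
  qed
qed



lemma cong_lt:
  fixes a b p :: nat
  assumes "a mod p = b mod p" "a < b"
  shows "a + p \<le> b"
proof -
  have "p dvd b - a" using mod_eq_dvd_iff_nat[of a b p] assms by simp
  moreover have "b - a > 0" using assms by simp
  ultimately have "p \<le> b - a" by (rule dvd_imp_le)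
  then show ?thesis using assms by simp
qed

lemma genus_formula:
  fixes S :: "nat set" and M :: "nat \<Rightarrow> nat" and p :: nat
  assumes p: "p > 0" and Mr: "\<And>r. r < p \<Longrightarrow> M r mod p = r"
    and S: "\<And>x. x \<in> S \<longleftrightarrow> M (x mod p) \<le> x"
  shows "int p * int (genus S) = (\<Sum>r<p. int (M r)) - (\<Sum>r<p. int r)"
proof -
  have bij: "bij_betw (\<lambda>x. (x mod p, x div p)) (UNIV - S) (SIGMA r:{..<p}. {..<M r div p})"
  proof (rule bij_betwI')
    fix x y assume "x \<in> UNIV - S" "y \<in> UNIV - S"
    show "((x mod p, x div p) = (y mod p, y div p)) = (x = y)"
      by (metis div_mult_mod_eq prod.inject)
  next
    fix x assume "x \<in> UNIV - S"
    then have lt: "x < M (x mod p)" using S by auto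
    have r: "x mod p < p" using p by simp
    have "M (x mod p) mod p = x mod p" using Mr r by blast
    then have "x + p \<le> M (x mod p)" using cong_lt lt by metis
    then have "(x + p) div p \<le> M (x mod p) div p" by (rule div_le_mono)
    moreover have "(x + p) div p = x div p + 1" using p by (simp add: div_add_self2)
    ultimately have "x div p < M (x mod p) div p" by simp
    then show "(x mod p, x div p) \<in> (SIGMA r:{..<p}. {..<M r div p})" using r by auto
  next
    fix z assume "z \<in> (SIGMA r:{..<p}. {..<M r div p})"
    then obtain r q where z: "z = (r,q)" "r < p" "q < M r div p" by blast
    define x where "x = p*q + r"
    have xm: "x mod p = r" "x div p = q" using z p unfolding x_def by auto
    have "M r = p * (M r div p) + r" using Mr[OF z(2)] by (metis div_mult_mod_eq mult.commute)
    moreover have "p * (q+1) \<le> p * (M r div p)" using z(3) by (intro mult_le_mono2) simp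
    ultimately have "x < M r" unfolding x_def using p by (simp add: algebra_simps)
    then have "x \<in> UNIV - S" using S xm by auto
    then show "\<exists>x\<in>UNIV - S. z = (x mod p, x div p)" using xm z by auto
  qed
  have "genus S = card (SIGMA r:{..<p}. {..<M r div p})"
    unfolding genus_def using bij_betw_same_card[OF bij] .
  also have "\<dots> = (\<Sum>r<p. M r div p)" by simp
  finally have g: "int (genus S) = (\<Sum>r<p. int (M r div p))" by simp
  have "int p * int (genus S) = (\<Sum>r<p. int p * int (M r div p))" using g by (simp add: sum_distrib_left)
  also have "\<dots> = (\<Sum>r<p. int (M r) - int r)"
  proof (rule sum.cong)
    fix r assume "r \<in> {..<p}"
    then have "M r mod p = r" using Mr by simp
    then have "p * (M r div p) + r = M r" by (metis div_mult_mod_eq mult.commute)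
    then show "int p * int (M r div p) = int (M r) - int r" by (metis add_diff_cancel_right' of_nat_add of_nat_mult)
  qed simp
  finally show ?thesis by (simp add: sum_subtractf)
qed

lemma frob_facts:
  fixes S :: "nat set" and M :: "nat \<Rightarrow> nat" and p :: nat
  assumes p: "p > 0" and Mr: "\<And>r. r < p \<Longrightarrow> M r mod p = r"
    and S: "\<And>x. x \<in> S \<longleftrightarrow> M (x mod p) \<le> x"
    and r0: "r0 < p" and mx: "\<And>r. r < p \<Longrightarrow> M r \<le> M r0"
  shows "frobenius S = int (M r0) - int p"
    and "\<And>x. int x > frobenius S \<Longrightarrow> x \<in> S"
    and "frobenius S \<ge> 0 \<Longrightarrow> nat (frobenius S) \<notin> S"
    and "frobenius S \<ge> -1"
proof -
  define F where "F = int (M r0) - int p"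
  have m0: "M r0 mod p = r0" using Mr r0 by blast
  have "M (p - 1) mod p = p - 1" using Mr p by simp
  then have "p - 1 \<le> M (p - 1)" using mod_less_eq_dividend[of "M (p - 1)" p] by simp
  moreover have "M (p - 1) \<le> M r0" using mx p by simp
  ultimately have Fge: "F \<ge> -1" unfolding F_def using p by linarith
  have big: "x \<in> S" if "int x > F" for x
  proof -
    have r: "x mod p < p" using p by simp
    have "M (x mod p) mod p = x mod p" using Mr r by blast
    moreover have "M (x mod p) < x + p" using mx[OF r] that unfolding F_def by linarith
    ultimately have "M (x mod p) \<le> x"
    proof -
      assume h1: "M (x mod p) mod p = x mod p" and h2: "M (x mod p) < x + p"
      show ?thesis
      proof (rule ccontr)
        assume "\<not> M (x mod p) \<le> x"
        then have "x < M (x mod p)" by simp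
        then have "x + p \<le> M (x mod p)" using cong_lt[of x p "M (x mod p)"] h1 by simp
        then show False using h2 by simp
      qed
    qed
    then show ?thesis using S by blast
  qed
  have notin: "F \<notin> int ` S"
  proof
    assume "F \<in> int ` S"
    then obtain x where x: "x \<in> S" "F = int x" by blast
    then have xe: "x + p = M r0" unfolding F_def by linarith
    then have "(x + p) mod p = r0" using m0 by simp
    then have "x mod p = r0" by simp
    then show False using S x(1) xe p by auto
  qed
  have FF: "frobenius S = F" unfolding frobenius_def
  proof (rule Greatest_equality)
    show "F \<notin> int ` S" by (rule notin)
  next
    fix y assume y: "y \<notin> int ` S"
    show "y \<le> F"
    proof (rule ccontr)
      assume "\<not> y \<le> F"
      then have "y > F" by simp
      then have "y \<ge> 0" using Fge by simp
      then obtain x where "y = int x" using nonneg_int_cases by blast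
      then show False using big \<open>y > F\<close> y by blast
    qed
  qed
  show "frobenius S = int (M r0) - int p" using FF F_def by simp
  show "\<And>x. int x > frobenius S \<Longrightarrow> x \<in> S" using FF big by simp
  show "nat (frobenius S) \<notin> S" if "frobenius S \<ge> 0"
  proof
    assume "nat (frobenius S) \<in> S"
    then have "nat F \<in> S" using FF by simp
    then have "int (nat F) \<in> int ` S" by (rule imageI)
    then show False using notin that FF by simp
  qed
  show "frobenius S \<ge> -1" using FF Fge by simp
qed



lemma ps_delta:
  fixes S :: "nat set"
  assumes add: "\<And>x y. x \<in> S \<Longrightarrow> y \<in> S \<Longrightarrow> x + y \<in> S"
    and big: "\<And>x. int x > frobenius S \<Longrightarrow> x \<in> S"
    and nf: "frobenius S \<ge> 0 \<Longrightarrow> nat (frobenius S) \<notin> S"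
    and ge: "frobenius S \<ge> -1"
    and ps: "pseudo_symmetric S"
  shows "Delta S = 1"
proof -
  define g where "g = frobenius S"
  have ev: "even g" and eq: "int ` S \<union> {g - int s | s. s \<in> S} = UNIV - {g div 2}"
    using ps unfolding pseudo_symmetric_def g_def by auto
  have g0: "g \<ge> 0" using ev ge unfolding g_def by presburger
  define G where "G = nat g"
  have gG: "g = int G" using g0 G_def by simp
  define h where "h = G div 2"
  have hG: "int h = g div 2" using gG h_def ev by (simp add: zdiv_int)
  have GnS: "G \<notin> S" using nf g0 unfolding g_def G_def by simp
  have gaps: "UNIV - S \<subseteq> {..G}"
  proof
    fix x assume "x \<in> UNIV - S"
    then have "\<not> int x > g" using big g_def by auto
    then show "x \<in> {..G}" using gG by simp
  qed
  have hnS: "h \<notin> S"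
  proof
    assume "h \<in> S" then have "int h \<in> UNIV - {g div 2}" using eq by blast
    then show False using hG by simp
  qed
  have hle: "h \<le> G" unfolding h_def by simp
  have A: "G - x \<in> S" if xa: "x \<le> G" "x \<noteq> h" "x \<notin> S" for x
  proof -
    have "int x \<in> UNIV - {g div 2}" using xa hG by auto
    then have "int x \<in> int ` S \<union> {g - int s | s. s \<in> S}" using eq by blast
    then obtain s where "s \<in> S" "int x = g - int s" using xa(3) by auto
    then have "s = G - x" using gG by linarith
    then show ?thesis using \<open>s \<in> S\<close> by simp
  qed
  have Bf: "G - y \<notin> S" if "y \<le> G" "y \<in> S" for y
    using add[OF that(2)] that GnS by (metis le_add_diff_inverse)
  have bij: "bij_betw (\<lambda>x. G - x) ((UNIV - S) - {h}) (S \<inter> {..G})"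
  proof (rule bij_betw_byWitness[where f'="\<lambda>x. G - x"])
    show "\<forall>a\<in>(UNIV - S) - {h}. G - (G - a) = a" using gaps by auto
    show "\<forall>a\<in>S \<inter> {..G}. G - (G - a) = a" by auto
    show "(\<lambda>x. G - x) ` ((UNIV - S) - {h}) \<subseteq> S \<inter> {..G}" using A gaps by auto
    show "(\<lambda>x. G - x) ` (S \<inter> {..G}) \<subseteq> (UNIV - S) - {h}"
    proof
      fix z assume "z \<in> (\<lambda>x. G - x) ` (S \<inter> {..G})"
      then obtain y where y: "y \<in> S" "y \<le> G" "z = G - y" by auto
      have "z \<notin> S" using Bf y by simp
      moreover have "z \<noteq> h"
      proof
        assume "z = h"
        then have "y = h" using y ev gG unfolding h_def by presburger
        then show False using hnS y by simp
      qed
      ultimately show "z \<in> (UNIV - S) - {h}" by simp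
    qed
  qed
  have fin: "finite (UNIV - S)" using gaps finite_subset by blast
  have hin: "h \<in> UNIV - S" using hnS by simp
  have c1: "card (S \<inter> {..G}) = genus S - 1"
    using bij_betw_same_card[OF bij] fin hin unfolding genus_def by simp
  have un: "{..G} = (UNIV - S) \<union> (S \<inter> {..G})" using gaps by auto
  have "card {..G} = card (UNIV - S) + card (S \<inter> {..G})"
    by (subst un, rule card_Un_disjoint) (use fin in auto)
  then have "G + 1 = genus S + (genus S - 1)" using c1 unfolding genus_def by simp
  moreover have "genus S \<ge> 1" using fin hin unfolding genus_def by (metis One_nat_def Suc_leI card_gt_0_iff empty_iff)
  ultimately have "int G + 2 = 2 * int (genus S)" by linarith
  then show ?thesis unfolding Delta_def using gG g_def by linarith
qed



lemma bezout_set: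
  fixes B :: "nat set"
  assumes "finite B"
  shows "\<exists>c::nat\<Rightarrow>int. (\<Sum>b\<in>B. c b * int b) = int (Gcd B)"
  using assms
proof (induction B rule: finite_induct)
  case empty then show ?case by simp
next
  case (insert x F)
  then obtain c where c: "(\<Sum>b\<in>F. c b * int b) = int (Gcd F)" by blast
  obtain u v where uv: "u * int x + v * int (Gcd F) = gcd (int x) (int (Gcd F))" using bezout_int by blast
  define c' where "c' = (\<lambda>y. if y = x then u else v * c y)"
  have "(\<Sum>b\<in>insert x F. c' b * int b) = u * int x + (\<Sum>b\<in>F. c' b * int b)"
    using insert by (simp add: c'_def)
  also have "(\<Sum>b\<in>F. c' b * int b) = (\<Sum>b\<in>F. v * (c b * int b))"
    using insert by (intro sum.cong) (auto simp: c'_def)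
  also have "\<dots> = v * int (Gcd F)" using c by (simp add: sum_distrib_left[symmetric])
  finally show ?case using uv by auto
qed

lemma gauss_int: "2 * (\<Sum>r<p. int r) = int p * (int p - 1)"
  by (induction p) (auto simp: algebra_simps)



theorem mainTheorem2:
  fixes a :: "nat \<Rightarrow> nat" and n e :: nat
  assumes "n \<ge> 1"
    and "\<forall>i\<in>{1..n}. a i > 0"
    and "Gcd (a ` {1..n}) = 1"
    and "e > 0"
    and "gcd e (a 1) = 1"
  shows "Delta (gen_sg (insert (a 1) ((\<lambda>i. e * a i) ` {2..n})))
           = int e * Delta (gen_sg (a ` {1..n}))
         \<and> (pseudo_symmetric (gen_sg (insert (a 1) ((\<lambda>i. e * a i) ` {2..n}))) \<longrightarrow> e = 1)"
proof -
  define p where "p = a 1"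
  define B where "B = a ` {2..n}"
  define T where "T = gen_sg B"
  define S where "S = gen_sg (a ` {1..n})"
  define Se where "Se = gen_sg (insert (a 1) ((\<lambda>i. e * a i) ` {2..n}))"
  have p0: "p > 0" using assms(1,2) p_def by auto
  have finB: "finite B" unfolding B_def by simp
  have "{1..n} = insert 1 {2..n}" using assms(1) by auto
  then have ins: "a ` {1..n} = insert p B" unfolding p_def B_def by simp
  have imgB: "(\<lambda>i. e * a i) ` {2..n} = (*) e ` B" unfolding B_def by (simp add: image_image)
  have memS: "x \<in> S \<longleftrightarrow> (\<exists>k t. t \<in> T \<and> x = k * p + t)" for x
    unfolding S_def T_def ins using gen_insert[OF finB] by blast
  have Se2: "Se = gen_sg (insert p ((*) e ` B))" unfolding Se_def imgB p_def by simp
  have GI: "gen_sg ((*) e ` B) = (*) e ` T" unfolding T_def by (rule gen_image_mult[OF finB assms(4)])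
  have memSe: "x \<in> Se \<longleftrightarrow> (\<exists>k t. t \<in> T \<and> x = k * p + e * t)" for x
  proof -
    have "x \<in> Se \<longleftrightarrow> (\<exists>k t. t \<in> gen_sg ((*) e ` B) \<and> x = k * p + t)"
      unfolding Se2 by (rule gen_insert[OF finite_imageI[OF finB]])
    also have "\<dots> \<longleftrightarrow> (\<exists>k t. t \<in> T \<and> x = k * p + e * t)" unfolding GI by blast
    finally show ?thesis .
  qed
  obtain c :: "nat \<Rightarrow> int" where c: "(\<Sum>b\<in>insert p B. c b * int b) = 1"
    using bezout_set[of "insert p B"] finB assms(3) ins by auto
  have cB: "(\<Sum>b\<in>B. c b * int b) mod int p = 1 mod int p"
  proof (cases "p \<in> B")
    case True then show ?thesis using c by (simp add: insert_absorb)
  next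
    case False
    then have "c p * int p + (\<Sum>b\<in>B. c b * int b) = 1" using c finB by simp
    then show ?thesis by (metis mod_mult_self3)
  qed
  define d where "d = (\<lambda>b. nat (c b mod int p))"
  define t1 where "t1 = (\<Sum>b\<in>B. d b * b)"
  have t1T: "t1 \<in> T" unfolding t1_def T_def gen_sg_def by blast
  have "int t1 mod int p = (\<Sum>b\<in>B. (c b mod int p) * int b) mod int p"
    unfolding t1_def d_def using p0 by simp
  also have "\<dots> = (\<Sum>b\<in>B. ((c b mod int p) * int b) mod int p) mod int p"
    by (simp add: mod_sum_eq)
  also have "\<dots> = (\<Sum>b\<in>B. (c b * int b) mod int p) mod int p"
    by (simp add: mod_mult_left_eq)
  also have "\<dots> = 1 mod int p" using cB by (simp add: mod_sum_eq)
  finally have "int t1 mod int p = 1 mod int p" .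
  then have t1m: "t1 mod p = 1 mod p" by (metis of_nat_1 of_nat_eq_iff zmod_int)
  have resT: "\<exists>t\<in>T. t mod p = r" if "r < p" for r
  proof -
    have "r * t1 \<in> T" using t1T unfolding T_def by (rule gen_scale)
    moreover have "(r * t1) mod p = r" using t1m that by (metis mod_less mod_mult_right_eq mult.right_neutral)
    ultimately show ?thesis by blast
  qed
  define m where "m = (\<lambda>r. LEAST t. t \<in> T \<and> t mod p = r)"
  have mT: "m r \<in> T" "m r mod p = r" if "r < p" for r
    using LeastI_ex[OF resT[OF that, unfolded Bex_def]] unfolding m_def by auto
  have mle: "m r \<le> t" if "t \<in> T" "t mod p = r" for r t
    unfolding m_def using that by (simp add: Least_le)
  have dvdlem: "\<exists>k. x = k * p + y" if "y \<le> x" "y mod p = x mod p" for x y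
  proof -
    have "p dvd x - y" using mod_eq_dvd_iff_nat[OF that(1), of p] that(2) by simp
    then obtain k where "x - y = p * k" by blast
    then show ?thesis using that(1) by (metis add.commute le_add_diff_inverse mult.commute)
  qed
  have memS': "x \<in> S \<longleftrightarrow> m (x mod p) \<le> x" for x
  proof
    assume "x \<in> S"
    then obtain k t where kt: "t \<in> T" "x = k * p + t" using memS by blast
    then have "t mod p = x mod p" by simp
    then have "m (x mod p) \<le> t" using mle kt by blast
    then show "m (x mod p) \<le> x" using kt by simp
  next
    assume le: "m (x mod p) \<le> x"
    have r: "x mod p < p" using p0 by simp
    obtain k where "x = k * p + m (x mod p)" using dvdlem[OF le] mT[OF r] by metis
    then show "x \<in> S" using memS mT[OF r] by blast
  qed
  obtain u y where uy: "e * u = p * y + gcd e p" using bezout_nat[of e p] assms(4) by auto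
  have eu1: "e * u = 1 + y * p" using uy assms(5) p_def by simp
  have eu: "(e * u) mod p = 1 mod p" unfolding eu1 by (rule mod_mult_self1)
  have inv1: "(u * ((e * w) mod p)) mod p = w mod p" for w
  proof -
    have "(u * ((e * w) mod p)) mod p = ((e * u) * w) mod p" by (simp add: mod_mult_right_eq algebra_simps)
    also have "\<dots> = (((e * u) mod p) * w) mod p" by (simp add: mod_mult_left_eq)
    also have "\<dots> = w mod p" using eu by (simp add: mod_mult_left_eq)
    finally show ?thesis .
  qed
  define \<sigma> where "\<sigma> = (\<lambda>r. (u * r) mod p)"
  have \<sigma>lt: "\<sigma> r < p" for r using p0 \<sigma>_def by simp
  have e\<sigma>: "(e * \<sigma> r) mod p = r" if "r < p" for r
  proof -
    have "(e * \<sigma> r) mod p = (e * u * r) mod p" unfolding \<sigma>_def by (simp add: mod_mult_right_eq algebra_simps)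
    also have "\<dots> = (((e * u) mod p) * r) mod p" by (simp add: mod_mult_left_eq)
    also have "\<dots> = r" using eu that by (simp add: mod_mult_left_eq)
    finally show ?thesis .
  qed
  have \<sigma>e: "\<sigma> ((e * s) mod p) = s" if "s < p" for s
    using inv1[of s] that unfolding \<sigma>_def by simp
  have injs: "inj_on \<sigma> {..<p}" by (rule inj_onI) (metis e\<sigma> lessThan_iff)
  have imgs: "\<sigma> ` {..<p} = {..<p}" by (rule endo_inj_surj) (use \<sigma>lt injs in auto)
  define M' where "M' = (\<lambda>r. e * m (\<sigma> r))"
  have M'r: "M' r mod p = r" if "r < p" for r
  proof -
    have "M' r mod p = (e * (m (\<sigma> r) mod p)) mod p" unfolding M'_def by (simp add: mod_mult_right_eq)
    also have "\<dots> = (e * \<sigma> r) mod p" using mT(2)[OF \<sigma>lt] by simp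
    finally show ?thesis using e\<sigma>[OF that] by simp
  qed
  have memSe': "x \<in> Se \<longleftrightarrow> M' (x mod p) \<le> x" for x
  proof
    assume "x \<in> Se"
    then obtain k t where kt: "t \<in> T" "x = k * p + e * t" using memSe by blast
    have "(e * t) mod p = x mod p" using kt by simp
    then have "t mod p = \<sigma> (x mod p)" using inv1[of t] unfolding \<sigma>_def by simp
    then have "m (\<sigma> (x mod p)) \<le> t" using mle kt by blast
    then have "e * m (\<sigma> (x mod p)) \<le> e * t" by (rule mult_le_mono2)
    then show "M' (x mod p) \<le> x" unfolding M'_def using kt(2) by linarith
  next
    assume le: "M' (x mod p) \<le> x"
    have r: "x mod p < p" using p0 by simp
    obtain k where "x = k * p + M' (x mod p)" using dvdlem[OF le] M'r[OF r] by metis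
    then show "x \<in> Se" using memSe mT(1)[OF \<sigma>lt] unfolding M'_def by blast
  qed
  have gS: "int p * int (genus S) = (\<Sum>r<p. int (m r)) - (\<Sum>r<p. int r)"
    by (rule genus_formula[OF p0]) (use mT memS' in auto)
  have gSe: "int p * int (genus Se) = (\<Sum>r<p. int (M' r)) - (\<Sum>r<p. int r)"
    by (rule genus_formula[OF p0]) (use M'r memSe' in auto)
  have "(\<Sum>r<p. int (M' r)) = int e * (\<Sum>r<p. int (m (\<sigma> r)))"
    unfolding M'_def by (simp add: sum_distrib_left)
  also have "(\<Sum>r<p. int (m (\<sigma> r))) = (\<Sum>s\<in>\<sigma> ` {..<p}. int (m s))"
    using sum.reindex[OF injs, of "\<lambda>s. int (m s)"] by simp
  finally have sM': "(\<Sum>r<p. int (M' r)) = int e * (\<Sum>r<p. int (m r))" using imgs by simp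
  have finm: "finite (m ` {..<p})" "m ` {..<p} \<noteq> {}" using p0 by auto
  obtain s0 where s0: "s0 < p" "m s0 = Max (m ` {..<p})" using Max_in[OF finm] by auto
  have mx: "m r \<le> m s0" if "r < p" for r using s0 Max_ge[OF finm(1)] that by simp
  define r0 where "r0 = (e * s0) mod p"
  have r0: "r0 < p" "\<sigma> r0 = s0" using p0 \<sigma>e[OF s0(1)] r0_def by auto
  have mx': "M' r \<le> M' r0" if "r < p" for r unfolding M'_def using mx[OF \<sigma>lt] r0 by simp
  have fS: "frobenius S = int (m s0) - int p"
    by (rule frob_facts(1)[OF p0 _ _ s0(1)]) (use mT memS' mx in auto)
  have fSe: "frobenius Se = int (M' r0) - int p"
    by (rule frob_facts(1)[OF p0 _ _ r0(1)]) (use M'r memSe' mx' in auto)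
  have M'r0: "M' r0 = e * m s0" unfolding M'_def using r0 by simp
  define X where "X = (\<Sum>r<p. int (m r))"
  define R where "R = (\<Sum>r<p. int r)"
  have R2: "2 * R = int p * (int p - 1)" unfolding R_def by (rule gauss_int)
  have "int p * Delta Se = 2 * (int p * int (genus Se)) - int p - int p * (int e * int (m s0) - int p)"
    unfolding Delta_def fSe M'r0 by (simp add: algebra_simps)
  also have "\<dots> = 2 * (int e * X - R) - int p - int p * (int e * int (m s0) - int p)"
    using gSe sM' X_def R_def by simp
  also have "\<dots> = int e * (2 * (X - R) - int p - int p * (int (m s0) - int p))"
    using R2 by (simp add: algebra_simps)
  also have "\<dots> = int e * (2 * (int p * int (genus S)) - int p - int p * (int (m s0) - int p))"
    using gS X_def R_def by simp
  also have "\<dots> = int p * (int e * Delta S)"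
    unfolding Delta_def fS by (simp add: algebra_simps)
  finally have main: "Delta Se = int e * Delta S" using p0 by simp
  have ps: "e = 1" if "pseudo_symmetric Se"
  proof -
    have add: "x + y \<in> Se" if "x \<in> Se" "y \<in> Se" for x y
      using that unfolding Se_def by (rule gen_add)
    have "Delta Se = 1"
    proof (rule ps_delta[OF add])
      show "\<And>x. int x > frobenius Se \<Longrightarrow> x \<in> Se"
        by (rule frob_facts(2)[OF p0 _ _ r0(1)]) (use M'r memSe' mx' in auto)
      show "frobenius Se \<ge> 0 \<Longrightarrow> nat (frobenius Se) \<notin> Se"
        by (rule frob_facts(3)[OF p0 _ _ r0(1)]) (use M'r memSe' mx' in auto)
      show "frobenius Se \<ge> -1"
        by (rule frob_facts(4)[OF p0 _ _ r0(1)]) (use M'r memSe' mx' in auto)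
      show "pseudo_symmetric Se" by (rule that)
    qed
    then have "int e * Delta S = 1" using main by simp
    then show "e = 1" using assms(4) pos_zmult_eq_1_iff by auto
  qed
  show ?thesis using main ps unfolding Se_def S_def by blast
qed


end
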